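(* Let $A$ be the six-element poset $\{a_1,a_2,b_1,b_2,c_1,c_2\}$ whose order is generated by $a_i<b_j$ and $b_j<c_k$ for all $i,j,k\in\{1,2\}$ (so $a_1,a_2$ are incomparable, $b_1,b_2$ are incomparable, $c_1,c_2$ are incomparable, and $a_i<c_k$). Then $A$ is not cofibrant in the model structure on $\mathbf{Pos}$.
   Context: The model structure on $\mathbf{Pos}$: a map $f$ of posets is a weak equivalence/fibration iff it is so as a functor in the Thomason model structure on $\mathbf{Cat}$ (where $F$ is a weak equivalence/fibration iff $\mathrm{Ex}^2NF$ is one in the Kan–Quillen model structure on $\mathbf{sSet}$, $N$ the nerve, $\mathrm{Ex}$ Kan's functor); cofibrations are the maps with the left lifting property against acyclic fibrations. The classifying space of $A$ is homeomorphic to $S^2$. *)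

theory Defs
  imports Main
begin

text \<open>A poset is a carrier set X together with a relation R with partial_order_on X R.\<close>

definition mono_map :: "'a set \<Rightarrow> ('a \<times> 'a) set \<Rightarrow> 'b set \<Rightarrow> ('b \<times> 'b) set \<Rightarrow> ('a \<Rightarrow> 'b) \<Rightarrow> bool" where
  "mono_map X R Y S f \<longleftrightarrow> (\<forall>x\<in>X. f x \<in> Y) \<and> (\<forall>x\<in>X. \<forall>y\<in>X. (x, y) \<in> R \<longrightarrow> (f x, f y) \<in> S)"

text \<open>Vertices of Sd(Delta^n): nonempty subsets of [n] = {0..n}, ordered by inclusion.\<close>
definition sd_simplex :: "nat \<Rightarrow> nat set set" where
  "sd_simplex n = {s. s \<noteq> {} \<and> s \<subseteq> {0..n}}"

text \<open>The poset sd(sd[n]): nonempty finite chains of nonempty subsets of [n], ordered by inclusion.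
  Its nerve is Sd^2 Delta^n.\<close>
definition sd2 :: "nat \<Rightarrow> nat set set set" where
  "sd2 n = {c. c \<noteq> {} \<and> finite c \<and> c \<subseteq> sd_simplex n \<and> (\<forall>s\<in>c. \<forall>t\<in>c. s \<subseteq> t \<or> t \<subseteq> s)}"

definition coface :: "nat \<Rightarrow> nat \<Rightarrow> nat" where
  "coface i j = (if j < i then j else Suc j)"

text \<open>n-simplices of Ex^2 N P = Hom(Sd^2 Delta^n, N P) = monotone maps sd(sd[n]) -> P
  (represented extensionally: undefined outside sd2 n).\<close>
definition ex2 :: "'a set \<Rightarrow> ('a \<times> 'a) set \<Rightarrow> nat \<Rightarrow> (nat set set \<Rightarrow> 'a) set" where
  "ex2 P R n = {g. mono_map (sd2 n) {(c, d). c \<subseteq> d} P R g \<and> (\<forall>c. c \<notin> sd2 n \<longrightarrow> g c = undefined)}"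

text \<open>Face map d_i : (Ex^2 N P)_n -> (Ex^2 N P)_(n-1), precomposition with Sd^2(delta^i).\<close>
definition ex2_face :: "nat \<Rightarrow> nat \<Rightarrow> (nat set set \<Rightarrow> 'a) \<Rightarrow> (nat set set \<Rightarrow> 'a)" where
  "ex2_face n i g = (\<lambda>c. if c \<in> sd2 (n - 1) then g ((\<lambda>s. coface i ` s) ` c) else undefined)"

definition ex2_map :: "nat \<Rightarrow> ('a \<Rightarrow> 'b) \<Rightarrow> (nat set set \<Rightarrow> 'a) \<Rightarrow> (nat set set \<Rightarrow> 'b)" where
  "ex2_map n f g = (\<lambda>c. if c \<in> sd2 n then f (g c) else undefined)"

text \<open>f : (X,R) -> (Y,S) is an acyclic fibration iff Ex^2 N f is an acyclic (= trivial) Kan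
  fibration, i.e. has the right lifting property against all boundary inclusions
  dDelta^n -> Delta^n.  A map dDelta^n -> K is a family x_0..x_n of (n-1)-simplices with
  d_i x_j = d_(j-1) x_i for i < j (empty family for n = 0).\<close>
definition pos_acyclic_fibration ::
  "'a set \<Rightarrow> ('a \<times> 'a) set \<Rightarrow> 'b set \<Rightarrow> ('b \<times> 'b) set \<Rightarrow> ('a \<Rightarrow> 'b) \<Rightarrow> bool" where
  "pos_acyclic_fibration X R Y S f \<longleftrightarrow>
     mono_map X R Y S f \<and>
     (\<forall>y\<in>ex2 Y S 0. \<exists>z\<in>ex2 X R 0. ex2_map 0 f z = y) \<and>
     (\<forall>n\<ge>1. \<forall>xs :: nat \<Rightarrow> (nat set set \<Rightarrow> 'a). \<forall>y.
        (\<forall>i\<le>n. xs i \<in> ex2 X R (n - 1)) \<and>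
        (n \<ge> 2 \<longrightarrow> (\<forall>i j. i < j \<and> j \<le> n \<longrightarrow>
             ex2_face (n - 1) i (xs j) = ex2_face (n - 1) (j - 1) (xs i))) \<and>
        y \<in> ex2 Y S n \<and>
        (\<forall>i\<le>n. ex2_face n i y = ex2_map (n - 1) f (xs i))
        \<longrightarrow> (\<exists>z\<in>ex2 X R n. (\<forall>i\<le>n. ex2_face n i z = xs i) \<and> ex2_map n f z = y))"

text \<open>(A,RA) is cofibrant iff the empty map into it has the LLP against all acyclic fibrations,
  i.e. every monotone map A -> Y lifts along every acyclic fibration X -> Y.  HOL cannot
  quantify over all types, so the quantification is over posets whose carriers live in a
  given type 'x.\<close>
definition pos_cofibrant_wrt :: "'x itself \<Rightarrow> 'a set \<Rightarrow> ('a \<times> 'a) set \<Rightarrow> bool" where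
  "pos_cofibrant_wrt _ A RA \<longleftrightarrow>
     (\<forall>(X :: 'x set) RX (Y :: 'x set) RY p.
        partial_order_on X RX \<and> partial_order_on Y RY \<and> pos_acyclic_fibration X RX Y RY p \<longrightarrow>
        (\<forall>g. mono_map A RA Y RY g \<longrightarrow>
             (\<exists>h. mono_map A RA X RX h \<and> (\<forall>a\<in>A. p (h a) = g a))))"

datatype A_elt = a1 | a2 | b1 | b2 | c1 | c2

fun A_level :: "A_elt \<Rightarrow> nat" where
  "A_level a1 = 0" | "A_level a2 = 0" | "A_level b1 = 1" | "A_level b2 = 1"
| "A_level c1 = 2" | "A_level c2 = 2"

definition A_rel :: "(A_elt \<times> A_elt) set" where
  "A_rel = {(x, y). x = y \<or> A_level x < A_level y}"

end

theory Submission
  imports Defs "HOL-Library.FuncSet" "HOL-Library.Countable_Set"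
begin

definition Bn :: "nat \<Rightarrow> nat set set set" where
  "Bn n = {c \<in> sd2 n. {0..n} \<notin> c}"
definition cone :: "nat \<Rightarrow> nat set set set" where
  "cone n = insert {} (Bn n)"
definition img :: "nat \<Rightarrow> nat set set \<Rightarrow> nat set set" where
  "img i c = (\<lambda>s. coface i ` s) ` c"
definition codeg :: "nat \<Rightarrow> nat \<Rightarrow> nat" where
  "codeg i j = (if j < i then j else j - 1)"
definition pre :: "nat \<Rightarrow> nat set set \<Rightarrow> nat set set" where
  "pre i c = (\<lambda>s. codeg i ` s) ` c"

lemma sd2_iff: "c \<in> sd2 n \<longleftrightarrow> c \<noteq> {} \<and> finite c \<and> (\<forall>s\<in>c. s \<noteq> {} \<and> s \<subseteq> {0..n}) \<and> (\<forall>s\<in>c. \<forall>t\<in>c. s \<subseteq> t \<or> t \<subseteq> s)"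
  unfolding sd2_def sd_simplex_def by auto

lemma finite_sd2: "finite (sd2 n)"
proof -
  have "sd2 n \<subseteq> Pow (Pow {0..n})" unfolding sd2_def sd_simplex_def by auto
  then show ?thesis by (rule finite_subset) auto
qed

lemma img_sd2: assumes "c \<in> sd2 m" shows "img i c \<in> sd2 (Suc m)"
proof -
  have c: "c \<noteq> {}" "finite c" "\<forall>s\<in>c. s \<noteq> {} \<and> s \<subseteq> {0..m}" "\<forall>s\<in>c. \<forall>t\<in>c. s \<subseteq> t \<or> t \<subseteq> s"
    using assms unfolding sd2_iff by auto
  have le: "coface i j \<le> Suc m" if "j \<le> m" for j using that unfolding coface_def by auto
  have 1: "img i c \<noteq> {}" "finite (img i c)" using c unfolding img_def by auto
  have 2: "\<forall>s\<in>img i c. s \<noteq> {} \<and> s \<subseteq> {0..Suc m}"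
  proof
    fix s assume "s \<in> img i c"
    then obtain t where t: "t \<in> c" "s = coface i ` t" unfolding img_def by blast
    then have "t \<noteq> {}" "t \<subseteq> {0..m}" using c by auto
    then show "s \<noteq> {} \<and> s \<subseteq> {0..Suc m}" using t le by auto
  qed
  have 3: "\<forall>s\<in>img i c. \<forall>t\<in>img i c. s \<subseteq> t \<or> t \<subseteq> s"
  proof (intro ballI)
    fix s t assume "s \<in> img i c" "t \<in> img i c"
    then obtain s' t' where "s' \<in> c" "s = coface i ` s'" "t' \<in> c" "t = coface i ` t'" unfolding img_def by blast
    then show "s \<subseteq> t \<or> t \<subseteq> s" using c(4) by (meson image_mono)
  qed
  show ?thesis unfolding sd2_iff using 1 2 3 by blast
qed

lemma img_miss: "s \<in> img i c \<Longrightarrow> i \<notin> s"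
  unfolding img_def coface_def by auto

lemma codeg_le: "j \<le> Suc m \<Longrightarrow> i \<le> Suc m \<Longrightarrow> j \<noteq> i \<Longrightarrow> codeg i j \<le> m"
  unfolding codeg_def by auto

lemma pre_sd2: assumes "c \<in> sd2 (Suc m)" "i \<le> Suc m" "\<forall>s\<in>c. i \<notin> s" shows "pre i c \<in> sd2 m"
proof -
  have c: "c \<noteq> {}" "finite c" "\<forall>s\<in>c. s \<noteq> {} \<and> s \<subseteq> {0..Suc m}" "\<forall>s\<in>c. \<forall>t\<in>c. s \<subseteq> t \<or> t \<subseteq> s"
    using assms unfolding sd2_iff by auto
  have 1: "pre i c \<noteq> {}" "finite (pre i c)" using c unfolding pre_def by auto
  have 2: "\<forall>s\<in>pre i c. s \<noteq> {} \<and> s \<subseteq> {0..m}"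
  proof
    fix s assume "s \<in> pre i c"
    then obtain t where t: "t \<in> c" "s = codeg i ` t" unfolding pre_def by blast
    then have "t \<noteq> {}" "t \<subseteq> {0..Suc m}" "i \<notin> t" using c assms(3) by auto
    moreover have "codeg i j \<le> m" if "j \<in> t" for j
    proof -
      have "j \<le> Suc m" "j \<noteq> i" using that calculation by auto
      then show ?thesis using codeg_le[of j m i] assms(2) by blast
    qed
    ultimately show "s \<noteq> {} \<and> s \<subseteq> {0..m}" using t by auto
  qed
  have 3: "\<forall>s\<in>pre i c. \<forall>t\<in>pre i c. s \<subseteq> t \<or> t \<subseteq> s"
  proof (intro ballI)
    fix s t assume "s \<in> pre i c" "t \<in> pre i c"
    then obtain s' t' where "s' \<in> c" "s = codeg i ` s'" "t' \<in> c" "t = codeg i ` t'" unfolding pre_def by blast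
    then show "s \<subseteq> t \<or> t \<subseteq> s" using c(4) by (meson image_mono)
  qed
  show ?thesis unfolding sd2_iff using 1 2 3 by blast
qed

lemma img_pre: assumes "\<forall>s\<in>c. i \<notin> s" shows "img i (pre i c) = c"
proof -
  have "coface i ` codeg i ` s = s" if "s \<in> c" for s
  proof -
    have "coface i (codeg i j) = j" if "j \<in> s" for j
    proof -
      have "j \<noteq> i" using assms \<open>s \<in> c\<close> that by auto
      then show ?thesis unfolding coface_def codeg_def by auto
    qed
    then show ?thesis by (simp add: image_image cong: image_cong)
  qed
  then show ?thesis unfolding img_def pre_def by (simp add: image_image cong: image_cong)
qed

lemma pre_img: "pre i (img i c) = c"
proof -
  have "codeg i ` coface i ` s = s" for s
  proof -
    have "codeg i (coface i j) = j" for j 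
      unfolding coface_def codeg_def by auto
    then show ?thesis by (simp add: image_image)
  qed
  then show ?thesis unfolding img_def pre_def by (simp add: image_image)
qed

lemma pre_miss: assumes "i < j" "\<forall>s\<in>c. i \<notin> s \<and> j \<notin> s" shows "\<forall>s\<in>pre j c. i \<notin> s"
proof
  fix s assume "s \<in> pre j c"
  then obtain t where t: "t \<in> c" "s = codeg j ` t" unfolding pre_def by auto
  have "codeg j x \<noteq> i" if "x \<in> t" for x
  proof -
    have "x \<noteq> i" "x \<noteq> j" using assms t that by auto
    then show ?thesis using assms(1) unfolding codeg_def by auto
  qed
  then show "i \<notin> s" unfolding t(2) by blast
qed

lemma arith1: "i < j \<Longrightarrow> x \<noteq> i \<Longrightarrow> x \<noteq> j \<Longrightarrow> coface i (coface (j-1) (codeg i (codeg j x))) = x"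
  unfolding coface_def codeg_def by (cases "x < i"; cases "x < j"; simp; linarith?; presburger)

lemma simp_id: assumes "i < j" "\<forall>s\<in>c. i \<notin> s \<and> j \<notin> s"
  shows "img i (img (j - 1) (pre i (pre j c))) = c"
proof -
  have "coface i ` coface (j-1) ` codeg i ` codeg j ` s = s" if "s \<in> c" for s
  proof -
    have "coface i (coface (j-1) (codeg i (codeg j x))) = x" if "x \<in> s" for x
      using assms \<open>s \<in> c\<close> that arith1 by metis
    then show ?thesis by (simp add: image_image cong: image_cong)
  qed
  then show ?thesis unfolding img_def pre_def by (simp add: image_image cong: image_cong)
qed

lemma chain_union_mem: assumes "finite c" "c \<noteq> {}" "\<forall>s\<in>c. \<forall>t\<in>c. s \<subseteq> t \<or> t \<subseteq> s"
  shows "\<Union>c \<in> c"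
  using assms
proof (induction c rule: finite_ne_induct)
  case (singleton x) then show ?case by simp
next
  case (insert x F)
  then have "\<Union>F \<in> F" by blast
  then have "x \<subseteq> \<Union>F \<or> \<Union>F \<subseteq> x" using insert by auto
  then show ?case using \<open>\<Union>F \<in> F\<close> by (auto simp: Un_absorb1 Un_absorb2)
qed

lemma Bn_miss: assumes "c \<in> Bn n" shows "\<exists>i\<le>n. \<forall>s\<in>c. i \<notin> s"
proof -
  have "\<Union>c \<in> c" using assms chain_union_mem unfolding Bn_def sd2_iff by auto
  then have "\<Union>c \<noteq> {0..n}" "\<Union>c \<subseteq> {0..n}" using assms unfolding Bn_def sd2_iff by auto
  then obtain i where "i \<in> {0..n}" "i \<notin> \<Union>c" by blast
  then show ?thesis by auto
qed

lemma img_Bn: assumes "c \<in> sd2 m" "i \<le> Suc m" shows "img i c \<in> Bn (Suc m)"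
proof -
  have "{0..Suc m} \<notin> img i c" using img_miss assms(2) by (metis atLeastAtMost_iff le0)
  then show ?thesis using img_sd2[OF assms(1)] by (simp add: Bn_def)
qed

lemma cone_ins: assumes "c \<in> cone n" shows "insert {0..n} c \<in> sd2 n"
proof -
  have "c = {} \<or> c \<in> sd2 n" using assms unfolding cone_def Bn_def by blast
  then have "finite c" "\<forall>s\<in>c. s \<noteq> {} \<and> s \<subseteq> {0..n}" "\<forall>s\<in>c. \<forall>t\<in>c. s \<subseteq> t \<or> t \<subseteq> s"
    unfolding sd2_iff by auto
  then show ?thesis unfolding sd2_iff by auto
qed

lemma Bn_sub: assumes "c \<in> Bn n" "c' \<subseteq> c" "c' \<noteq> {}" shows "c' \<in> Bn n"
proof -
  have c: "finite c" "\<forall>s\<in>c. s \<noteq> {} \<and> s \<subseteq> {0..n}" "\<forall>s\<in>c. \<forall>t\<in>c. s \<subseteq> t \<or> t \<subseteq> s" "{0..n} \<notin> c"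
    using assms unfolding Bn_def sd2_iff by auto
  have "finite c'" using c(1) assms(2) finite_subset by blast
  moreover have "\<forall>s\<in>c'. s \<noteq> {} \<and> s \<subseteq> {0..n}" using c(2) assms(2) by blast
  moreover have "\<forall>s\<in>c'. \<forall>t\<in>c'. s \<subseteq> t \<or> t \<subseteq> s" using c(3) assms(2) by blast
  moreover have "{0..n} \<notin> c'" using c(4) assms(2) by blast
  ultimately show ?thesis using assms(3) unfolding Bn_def sd2_iff by simp
qed

lemma cone_sub: assumes "c \<in> cone n" "c' \<subseteq> c" shows "c' \<in> cone n"
proof (cases "c' = {}")
  case True then show ?thesis by (simp add: cone_def)
next
  case False
  then have "c \<in> Bn n" using assms unfolding cone_def by auto
  then show ?thesis using Bn_sub[OF _ assms(2) False] unfolding cone_def by simp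
qed

lemma sd2_diff_cone: assumes "d \<in> sd2 n" shows "d - {{0..n}} \<in> cone n"
proof (cases "d - {{0..n}} = {}")
  case True then show ?thesis unfolding cone_def by simp
next
  case False
  have c: "finite d" "\<forall>s\<in>d. s \<noteq> {} \<and> s \<subseteq> {0..n}" "\<forall>s\<in>d. \<forall>t\<in>d. s \<subseteq> t \<or> t \<subseteq> s"
    using assms unfolding sd2_iff by auto
  have "finite (d - {{0..n}})" using c(1) by simp
  moreover have "\<forall>s\<in>d - {{0..n}}. s \<noteq> {} \<and> s \<subseteq> {0..n}" using c(2) by blast
  moreover have "\<forall>s\<in>d - {{0..n}}. \<forall>t\<in>d - {{0..n}}. s \<subseteq> t \<or> t \<subseteq> s" using c(3) by blast
  ultimately show ?thesis using False unfolding cone_def Bn_def sd2_iff by simp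
qed


datatype E = Base | Cell nat "nat set set \<Rightarrow> E" "nat set set \<Rightarrow> nat" "nat set set"

primrec below :: "E \<Rightarrow> E set" where
  "below Base = {Base}"
| "below (Cell n z y c) = {Cell n z y c' | c'. c' \<subseteq> c} \<union> (if c = {} then {} else (below \<circ> z) c)"

primrec pE :: "E \<Rightarrow> nat" where
  "pE Base = 0"
| "pE (Cell n z y c) = y (insert {0..n} c)"

definition cellok :: "nat set \<Rightarrow> (nat \<times> nat) set \<Rightarrow> E set \<Rightarrow> nat \<Rightarrow> (nat set set \<Rightarrow> E) \<Rightarrow> (nat set set \<Rightarrow> nat) \<Rightarrow> nat set set \<Rightarrow> bool" where
  "cellok Y S K n z y c \<longleftrightarrow> c \<in> cone n \<and> z \<in> (Bn n \<rightarrow>\<^sub>E K) \<and> y \<in> (sd2 n \<rightarrow>\<^sub>E Y) \<and>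
     (\<forall>d\<in>sd2 n. \<forall>d'\<in>sd2 n. d \<subseteq> d' \<longrightarrow> (y d, y d') \<in> S) \<and>
     (\<forall>q1\<in>Bn n. \<forall>q2\<in>Bn n. q1 \<subseteq> q2 \<longrightarrow> z q1 \<in> below (z q2)) \<and>
     (\<forall>q1\<in>Bn n. pE (z q1) = y q1)"

primrec L :: "nat set \<Rightarrow> (nat \<times> nat) set \<Rightarrow> nat \<Rightarrow> E set" where
  "L Y S 0 = {}"
| "L Y S (Suc k) = {Cell n z y c | n z y c. cellok Y S (L Y S k) n z y c}"

definition VV :: "nat set \<Rightarrow> (nat \<times> nat) set \<Rightarrow> E set" where
  "VV Y S = (\<Union>k. L Y S k)"

definition RE :: "nat set \<Rightarrow> (nat \<times> nat) set \<Rightarrow> (E \<times> E) set" where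
  "RE Y S = {(x, e). x \<in> VV Y S \<and> e \<in> VV Y S \<and> x \<in> below e}"

lemma cellok_mono: assumes "cellok Y S K n z y c" "K \<subseteq> K'" shows "cellok Y S K' n z y c"
proof -
  have "z \<in> Bn n \<rightarrow>\<^sub>E K" using assms(1) unfolding cellok_def by (elim conjE)
  then have "z \<in> Bn n \<rightarrow>\<^sub>E K'" using PiE_mono[of "Bn n" "\<lambda>_. K" "\<lambda>_. K'"] assms(2) by blast
  then show ?thesis using assms(1) unfolding cellok_def by (elim conjE) (intro conjI)
qed

lemma cellok_cone: "cellok Y S K n z y c \<Longrightarrow> c' \<in> cone n \<Longrightarrow> cellok Y S K n z y c'"
  unfolding cellok_def by (elim conjE) (intro conjI)

lemma cellok_coneD: "cellok Y S K n z y c \<Longrightarrow> c \<in> cone n"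
  unfolding cellok_def by (elim conjE)
lemma cellok_Bn: "cellok Y S K n z y c \<Longrightarrow> c \<noteq> {} \<Longrightarrow> c \<in> Bn n"
  using cellok_coneD unfolding cone_def by fastforce
lemma cellok_z: "cellok Y S K n z y c \<Longrightarrow> c' \<in> Bn n \<Longrightarrow> z c' \<in> K"
  unfolding cellok_def by (elim conjE) (rule PiE_mem)
lemma cellok_zmono: "cellok Y S K n z y c \<Longrightarrow> q1 \<in> Bn n \<Longrightarrow> q2 \<in> Bn n \<Longrightarrow> q1 \<subseteq> q2 \<Longrightarrow> z q1 \<in> below (z q2)"
  unfolding cellok_def by (elim conjE) simp
lemma cellok_pz: "cellok Y S K n z y c \<Longrightarrow> q1 \<in> Bn n \<Longrightarrow> pE (z q1) = y q1"
  unfolding cellok_def by (elim conjE) simp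
lemma cellok_ymono: "cellok Y S K n z y c \<Longrightarrow> d \<in> sd2 n \<Longrightarrow> d' \<in> sd2 n \<Longrightarrow> d \<subseteq> d' \<Longrightarrow> (y d, y d') \<in> S"
  unfolding cellok_def by (elim conjE) simp
lemma cellok_yY: "cellok Y S K n z y c \<Longrightarrow> d \<in> sd2 n \<Longrightarrow> y d \<in> Y"
  unfolding cellok_def by (elim conjE) (rule PiE_mem)

lemma below_cases:
  assumes "x \<in> below (Cell n z y c)"
  obtains c' where "c' \<subseteq> c" "x = Cell n z y c'" | "c \<noteq> {}" "x \<in> below (z c)"
  using assms by (cases "c = {}") auto

lemma L_Suc_Cell: "Cell n z y c \<in> L Y S (Suc k) \<longleftrightarrow> cellok Y S (L Y S k) n z y c"
  by simp

lemma L_Suc_E: "e \<in> L Y S (Suc k) \<Longrightarrow> \<exists>n z y c. e = Cell n z y c \<and> cellok Y S (L Y S k) n z y c"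
  by auto

lemma L_mono_Suc: "L Y S k \<subseteq> L Y S (Suc k)"
proof (induction k)
  case 0 then show ?case by simp
next
  case (Suc k)
  show ?case
  proof
    fix e assume "e \<in> L Y S (Suc k)"
    then obtain n z y c where "e = Cell n z y c" "cellok Y S (L Y S k) n z y c" by auto
    then show "e \<in> L Y S (Suc (Suc k))" using cellok_mono[OF _ Suc.IH] by simp
  qed
qed

lemma L_mono: "k \<le> k' \<Longrightarrow> L Y S k \<subseteq> L Y S k'"
  by (induction k' rule: dec_induct) (use L_mono_Suc in blast)+

lemma Base_notin: "Base \<notin> L Y S k"
  by (cases k) auto

lemma below_refl: "e \<in> below e"
  by (cases e) auto

lemma below_L: "e \<in> L Y S k \<Longrightarrow> below e \<subseteq> L Y S k"
proof (induction k arbitrary: e)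
  case 0 then show ?case by simp
next
  case (Suc k)
  then obtain n z y c where e: "e = Cell n z y c" and ok: "cellok Y S (L Y S k) n z y c" by auto
  show ?case
  proof
    fix x assume "x \<in> below e"
    then consider c' where "c' \<subseteq> c" "x = Cell n z y c'" | "c \<noteq> {}" "x \<in> below (z c)"
      using below_cases unfolding e by metis
    then show "x \<in> L Y S (Suc k)"
    proof cases
      case 1
      then have "c' \<in> cone n" using cellok_coneD[OF ok] cone_sub by blast
      then show ?thesis using 1 cellok_cone[OF ok] by simp
    next
      case 2
      then have "c \<in> Bn n" using cellok_Bn[OF ok] by blast
      then have "z c \<in> L Y S k" using cellok_z[OF ok] by blast
      then have "x \<in> L Y S k" using Suc.IH 2(2) by blast
      then show ?thesis using L_mono_Suc by blast
    qed
  qed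
qed

lemma below_trans_L: "e \<in> L Y S k \<Longrightarrow> x \<in> below w \<Longrightarrow> w \<in> below e \<Longrightarrow> x \<in> below e"
proof (induction k arbitrary: e x w)
  case 0 then show ?case by simp
next
  case (Suc k)
  then obtain n z y c where e: "e = Cell n z y c" and ok: "cellok Y S (L Y S k) n z y c" by auto
  from Suc.prems(3) consider c' where "c' \<subseteq> c" "w = Cell n z y c'" | "c \<noteq> {}" "w \<in> below (z c)"
    using below_cases unfolding e by metis
  then show ?case
  proof cases
    case 1
    from Suc.prems(2) consider c'' where "c'' \<subseteq> c'" "x = Cell n z y c''" | "c' \<noteq> {}" "x \<in> below (z c')"
      using below_cases unfolding 1 by metis
    then show ?thesis
    proof cases
      case 1
      then show ?thesis using \<open>c' \<subseteq> c\<close> unfolding e by auto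
    next
      case 2
      have cc: "c \<noteq> {}" using 2 \<open>c' \<subseteq> c\<close> by auto
      have cB: "c \<in> Bn n" using cellok_Bn[OF ok cc] .
      have cB': "c' \<in> Bn n" using Bn_sub[OF cB \<open>c' \<subseteq> c\<close> 2(1)] .
      have "z c' \<in> below (z c)" using cellok_zmono[OF ok cB' cB \<open>c' \<subseteq> c\<close>] .
      moreover have "z c \<in> L Y S k" using cellok_z[OF ok cB] .
      ultimately have "x \<in> below (z c)" using Suc.IH 2(2) by blast
      then show ?thesis using cc unfolding e by auto
    qed
  next
    case 2
    have cB: "c \<in> Bn n" using cellok_Bn[OF ok 2(1)] .
    have "z c \<in> L Y S k" using cellok_z[OF ok cB] .
    then have "x \<in> below (z c)" using Suc.IH 2(2) Suc.prems(2) by blast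
    then show ?thesis using 2 unfolding e by auto
  qed
qed

lemma range_not_self: "x \<in> range z \<Longrightarrow> x \<noteq> Cell n z y c"
proof (induction x arbitrary: n z y c)
  case Base then show ?case by simp
next
  case (Cell n' z' y' c')
  show ?case
  proof
    assume eq: "Cell n' z' y' c' = Cell n z y c"
    then have "z' = z" by simp
    then have "Cell n' z' y' c' \<in> range z'" using Cell.prems by simp
    then show False using Cell.IH by blast
  qed
qed

lemma below_antisym_L: "e \<in> L Y S k \<Longrightarrow> x \<in> below e \<Longrightarrow> e \<in> below x \<Longrightarrow> x = e"
proof (induction k arbitrary: e x)
  case 0 then show ?case by simp
next
  case (Suc k)
  then obtain n z y c where e: "e = Cell n z y c" and ok: "cellok Y S (L Y S k) n z y c" by auto
  have key: False if cc: "c \<noteq> {}" and ez: "e \<in> below (z c)"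
  proof -
    have cB: "c \<in> Bn n" using cellok_Bn[OF ok cc] .
    have zL: "z c \<in> L Y S k" using cellok_z[OF ok cB] .
    have "z c \<in> below e" using cc below_refl[of "z c"] unfolding e by auto
    then have "e = z c" using Suc.IH[OF zL ez] by simp
    then show False using range_not_self[of "z c" z n y c] e by simp
  qed
  from Suc.prems(2) consider c' where "c' \<subseteq> c" "x = Cell n z y c'" | "c \<noteq> {}" "x \<in> below (z c)"
    using below_cases unfolding e by metis
  then show ?case
  proof cases
    case 1
    from Suc.prems(3) consider c'' where "c'' \<subseteq> c'" "e = Cell n z y c''" | "c' \<noteq> {}" "e \<in> below (z c')"
      using below_cases unfolding 1 by metis
    then show ?thesis
    proof cases
      case 1
      then show ?thesis using \<open>c' \<subseteq> c\<close> \<open>x = Cell n z y c'\<close> e by auto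
    next
      case 2
      have cc: "c \<noteq> {}" using 2 \<open>c' \<subseteq> c\<close> by auto
      have cB: "c \<in> Bn n" using cellok_Bn[OF ok cc] .
      have cB': "c' \<in> Bn n" using Bn_sub[OF cB \<open>c' \<subseteq> c\<close> 2(1)] .
      have "z c' \<in> below (z c)" using cellok_zmono[OF ok cB' cB \<open>c' \<subseteq> c\<close>] .
      moreover have "z c \<in> L Y S k" using cellok_z[OF ok cB] .
      ultimately have "e \<in> below (z c)" using below_trans_L 2(2) by blast
      then show ?thesis using key cc by blast
    qed
  next
    case 2
    have cB: "c \<in> Bn n" using cellok_Bn[OF ok 2(1)] .
    have "z c \<in> L Y S k" using cellok_z[OF ok cB] .
    then have "e \<in> below (z c)" using below_trans_L 2(2) Suc.prems(3) by blast
    then show ?thesis using key 2(1) by blast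
  qed
qed

lemma partial_order_VV: "partial_order_on (VV Y S) (RE Y S)"
proof -
  have "RE Y S \<subseteq> VV Y S \<times> VV Y S" unfolding RE_def by auto
  moreover have "refl_on (VV Y S) (RE Y S)" unfolding refl_on_def RE_def using below_refl by auto
  moreover have "trans (RE Y S)"
    unfolding trans_def RE_def VV_def using below_trans_L by blast
  moreover have "antisym (RE Y S)"
    unfolding antisym_def RE_def VV_def using below_antisym_L by blast
  ultimately show ?thesis unfolding partial_order_on_def preorder_on_def by blast
qed


lemma ex2_iff: "g \<in> ex2 P R n \<longleftrightarrow> (\<forall>c\<in>sd2 n. g c \<in> P) \<and> (\<forall>c\<in>sd2 n. \<forall>d\<in>sd2 n. c \<subseteq> d \<longrightarrow> (g c, g d) \<in> R) \<and> (\<forall>c. c \<notin> sd2 n \<longrightarrow> g c = undefined)"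
  unfolding ex2_def mono_map_def by auto

lemma pE_props:
  assumes po: "partial_order_on Y S" and e: "e \<in> L Y S k"
  shows "pE e \<in> Y \<and> (\<forall>x \<in> below e. (pE x, pE e) \<in> S)"
  using e
proof (induction k arbitrary: e)
  case 0 then show ?case by simp
next
  case (Suc k)
  then obtain n z y c where e: "e = Cell n z y c" and ok: "cellok Y S (L Y S k) n z y c" by auto
  have top: "insert {0..n} c \<in> sd2 n" using cone_ins cellok_coneD[OF ok] by blast
  have tr: "trans S" using po partial_order_onD by blast
  have "pE e \<in> Y" using cellok_yY[OF ok top] e by simp
  moreover have "(pE x, pE e) \<in> S" if x: "x \<in> below e" for x
    using x[unfolded e]
  proof (cases rule: below_cases)
    case (1 c')
    have "c' \<in> cone n" using cone_sub cellok_coneD[OF ok] 1(1) by blast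
    then have "insert {0..n} c' \<in> sd2 n" using cone_ins by blast
    then show ?thesis using cellok_ymono[OF ok _ top] 1 e by auto
  next
    case 2
    have cB: "c \<in> Bn n" using cellok_Bn[OF ok 2(1)] .
    have zL: "z c \<in> L Y S k" using cellok_z[OF ok cB] .
    have "(pE x, pE (z c)) \<in> S" using Suc.IH[OF zL] 2(2) by blast
    moreover have "pE (z c) = y c" using cellok_pz[OF ok cB] .
    moreover have "(y c, y (insert {0..n} c)) \<in> S"
      using cellok_ymono[OF ok _ top] cB unfolding Bn_def by auto
    ultimately show ?thesis using tr e unfolding trans_def by auto
  qed
  ultimately show ?case by blast
qed

lemma VV_L: "x \<in> VV Y S \<Longrightarrow> \<exists>k. x \<in> L Y S k"
  unfolding VV_def by blast

lemma mono_pE: assumes po: "partial_order_on Y S" shows "mono_map (VV Y S) (RE Y S) Y S pE"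
  unfolding mono_map_def RE_def using pE_props[OF po] VV_L by blast

lemma finite_Bn: "finite (Bn n)"
  using finite_sd2 unfolding Bn_def by auto

lemma fin_level:
  assumes "z \<in> Bn n \<rightarrow>\<^sub>E VV Y S"
  shows "\<exists>k. z \<in> Bn n \<rightarrow>\<^sub>E L Y S k"
proof -
  have "\<forall>q\<in>Bn n. \<exists>k. z q \<in> L Y S k" using assms VV_L by (metis PiE_mem)
  then obtain f where f: "\<forall>q\<in>Bn n. z q \<in> L Y S (f q)" by metis
  define k where "k = Max (f ` Bn n)"
  have "z q \<in> L Y S k" if "q \<in> Bn n" for q
  proof -
    have "f q \<le> k" unfolding k_def using that finite_Bn by auto
    then show ?thesis using L_mono f that by blast
  qed
  then show ?thesis using assms by (auto simp: PiE_iff)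
qed

lemma fill:
  assumes po: "partial_order_on Y S"
    and z: "z \<in> Bn n \<rightarrow>\<^sub>E VV Y S"
    and zm: "\<forall>q1\<in>Bn n. \<forall>q2\<in>Bn n. q1 \<subseteq> q2 \<longrightarrow> z q1 \<in> below (z q2)"
    and zp: "\<forall>q\<in>Bn n. pE (z q) = y q"
    and y: "y \<in> ex2 Y S n"
  defines "w \<equiv> \<lambda>d. if d \<in> sd2 n then (if {0..n} \<in> d then Cell n z y (d - {{0..n}}) else z d) else undefined"
  shows "w \<in> ex2 (VV Y S) (RE Y S) n" "\<forall>d\<in>Bn n. w d = z d" "ex2_map n pE w = y"
proof -
  obtain k where zk: "z \<in> Bn n \<rightarrow>\<^sub>E L Y S k" using fin_level[OF z] by blast
  have yY: "y \<in> sd2 n \<rightarrow>\<^sub>E Y" using y unfolding ex2_iff by (auto simp: PiE_iff extensional_def)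
  have ym: "\<forall>d\<in>sd2 n. \<forall>d'\<in>sd2 n. d \<subseteq> d' \<longrightarrow> (y d, y d') \<in> S" using y unfolding ex2_iff by auto
  have ok: "cellok Y S (L Y S k) n z y c" if "c \<in> cone n" for c
    unfolding cellok_def using that zk yY ym zm zp by blast
  have cellV: "Cell n z y c \<in> VV Y S" if "c \<in> cone n" for c
    using ok[OF that] unfolding VV_def by (metis L_Suc_Cell UNIV_I UN_I)
  have zV: "z q \<in> VV Y S" if "q \<in> Bn n" for q using z that by (metis PiE_mem)
  have wV: "w d \<in> VV Y S" if "d \<in> sd2 n" for d
    using that cellV zV sd2_diff_cone unfolding w_def Bn_def by auto
  have wle: "w d \<in> below (w d')" if "d \<in> sd2 n" "d' \<in> sd2 n" "d \<subseteq> d'" for d d'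
  proof (cases "{0..n} \<in> d'")
    case False
    then have "{0..n} \<notin> d" using that by auto
    then show ?thesis using False that zm unfolding w_def Bn_def by auto
  next
    case True
    note T = True
    show ?thesis
    proof (cases "{0..n} \<in> d")
      case True
      then show ?thesis using T that unfolding w_def by auto
    next
      case False
      have dB: "d \<in> Bn n" using False that unfolding Bn_def by auto
      have ne: "d \<noteq> {}" using that unfolding sd2_iff by auto
      have sub: "d \<subseteq> d' - {{0..n}}" using False that by auto
      have "d' - {{0..n}} \<noteq> {}" using sub ne by auto
      then have d'B: "d' - {{0..n}} \<in> Bn n" using sd2_diff_cone[OF that(2)] unfolding cone_def by auto
      have "z d \<in> below (z (d' - {{0..n}}))" using zm dB d'B sub by blast
      then show ?thesis using T False that \<open>d' - {{0..n}} \<noteq> {}\<close> unfolding w_def by auto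
    qed
  qed
  show "w \<in> ex2 (VV Y S) (RE Y S) n"
    unfolding ex2_iff RE_def using wV wle by (auto simp: w_def)
  show "\<forall>d\<in>Bn n. w d = z d" unfolding w_def Bn_def by auto
  have "pE (w d) = y d" if "d \<in> sd2 n" for d
  proof (cases "{0..n} \<in> d")
    case True
    then have "insert {0..n} (d - {{0..n}}) = d" by auto
    then show ?thesis using True that unfolding w_def by simp
  next
    case False
    then show ?thesis using that zp unfolding w_def Bn_def by auto
  qed
  moreover have "y d = undefined" if "d \<notin> sd2 n" for d using y that unfolding ex2_iff by auto
  ultimately show "ex2_map n pE w = y" unfolding ex2_map_def by auto
qed


lemma Bn0: "Bn 0 = {}"
proof -
  have "{0..0::nat} \<in> c" if "c \<in> sd2 0" for c
  proof -
    have "c \<noteq> {}" using that unfolding sd2_def by blast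
    then obtain s where "s \<in> c" by blast
    then have "s = {0}" using that unfolding sd2_iff by auto
    then show ?thesis using \<open>s \<in> c\<close> by simp
  qed
  then show ?thesis unfolding Bn_def by auto
qed

lemma face_eval: "c \<in> sd2 (m - 1) \<Longrightarrow> ex2_face m i g c = g (img i c)"
  unfolding ex2_face_def img_def by simp

lemma map_eval: "c \<in> sd2 m \<Longrightarrow> ex2_map m f g c = f (g c)"
  unfolding ex2_map_def by simp

lemma wd:
  assumes n1: "n \<ge> 1"
    and compat: "n \<ge> 2 \<longrightarrow> (\<forall>i j. i < j \<and> j \<le> n \<longrightarrow> ex2_face (n - 1) i (xs j) = ex2_face (n - 1) (j - 1) (xs i))"
    and c: "c \<in> Bn n" and ij: "i < j" "j \<le> n" and mi: "\<forall>s\<in>c. i \<notin> s" and mj: "\<forall>s\<in>c. j \<notin> s"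
  shows "xs i (pre i c) = xs j (pre j c)"
proof -
  have csd: "c \<in> sd2 n" using c unfolding Bn_def by auto
  obtain s where s: "s \<in> c" using csd unfolding sd2_iff by auto
  have "s \<noteq> {}" "s \<subseteq> {0..n}" using s csd unfolding sd2_iff by auto
  have n2: "n \<ge> 2"
  proof (rule ccontr)
    assume "\<not> n \<ge> 2"
    then have "n = 1" using n1 by auto
    then have "i = 0" "j = 1" using ij by auto
    have "x \<notin> s" for x
    proof
      assume x: "x \<in> s"
      then have "x \<le> 1" using \<open>s \<subseteq> {0..n}\<close> \<open>n = 1\<close> by auto
      moreover have "x \<noteq> i" "x \<noteq> j" using x s mi mj by auto
      ultimately show False using \<open>i = 0\<close> \<open>j = 1\<close> by linarith
    qed
    then show False using \<open>s \<noteq> {}\<close> by blast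
  qed
  have nn: "Suc (n - 2) = n - 1" "Suc (n - 1) = n" using n2 by auto
  have pj: "pre j c \<in> sd2 (Suc (n - 2))" using pre_sd2[of c "n - 1" j] csd ij mj unfolding nn by simp
  have mij: "\<forall>s\<in>pre j c. i \<notin> s" using pre_miss ij(1) mi mj by blast
  define c0 where "c0 = pre i (pre j c)"
  have c0: "c0 \<in> sd2 (n - 2)" unfolding c0_def using pre_sd2[OF pj _ mij] ij by simp
  have c0': "c0 \<in> sd2 (n - 1 - 1)" using c0 by (simp add: numeral_2_eq_2)
  have e1: "img i c0 = pre j c" unfolding c0_def using img_pre[OF mij] .
  have "img i (img (j - 1) c0) = c" unfolding c0_def using simp_id ij(1) mi mj by blast
  then have e2: "img (j - 1) c0 = pre i c" using pre_img[of i "img (j - 1) c0"] by simp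
  have "xs j (pre j c) = xs j (img i c0)" by (simp only: e1)
  also have "\<dots> = ex2_face (n - 1) i (xs j) c0" by (simp only: face_eval[OF c0'])
  also have "\<dots> = ex2_face (n - 1) (j - 1) (xs i) c0" using compat n2 ij by simp
  also have "\<dots> = xs i (img (j - 1) c0)" by (simp only: face_eval[OF c0'])
  also have "\<dots> = xs i (pre i c)" by (simp only: e2)
  finally show ?thesis by simp
qed

lemma acyclic_VV:
  assumes po: "partial_order_on Y S"
  shows "pos_acyclic_fibration (VV Y S) (RE Y S) Y S pE"
  unfolding pos_acyclic_fibration_def
proof (intro conjI)
  show "mono_map (VV Y S) (RE Y S) Y S pE" using mono_pE[OF po] .
  show "\<forall>y\<in>ex2 Y S 0. \<exists>z\<in>ex2 (VV Y S) (RE Y S) 0. ex2_map 0 pE z = y"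
  proof
    fix y assume y: "y \<in> ex2 Y S 0"
    have z: "(\<lambda>_. undefined) \<in> Bn 0 \<rightarrow>\<^sub>E VV Y S" unfolding Bn0 by simp
    show "\<exists>z\<in>ex2 (VV Y S) (RE Y S) 0. ex2_map 0 pE z = y"
      using fill(1,3)[OF po z _ _ y] unfolding Bn0 by blast
  qed
  show "\<forall>n\<ge>1. \<forall>xs y. (\<forall>i\<le>n. xs i \<in> ex2 (VV Y S) (RE Y S) (n - 1)) \<and>
        (2 \<le> n \<longrightarrow> (\<forall>i j. i < j \<and> j \<le> n \<longrightarrow> ex2_face (n - 1) i (xs j) = ex2_face (n - 1) (j - 1) (xs i))) \<and>
        y \<in> ex2 Y S n \<and> (\<forall>i\<le>n. ex2_face n i y = ex2_map (n - 1) pE (xs i)) \<longrightarrow>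
        (\<exists>z\<in>ex2 (VV Y S) (RE Y S) n. (\<forall>i\<le>n. ex2_face n i z = xs i) \<and> ex2_map n pE z = y)"
  proof (intro allI impI, elim conjE)
    fix n :: nat and xs :: "nat \<Rightarrow> nat set set \<Rightarrow> E" and y
    assume n1: "1 \<le> n" and xs: "\<forall>i\<le>n. xs i \<in> ex2 (VV Y S) (RE Y S) (n - 1)"
      and compat: "2 \<le> n \<longrightarrow> (\<forall>i j. i < j \<and> j \<le> n \<longrightarrow> ex2_face (n - 1) i (xs j) = ex2_face (n - 1) (j - 1) (xs i))"
      and y: "y \<in> ex2 Y S n" and fy: "\<forall>i\<le>n. ex2_face n i y = ex2_map (n - 1) pE (xs i)"
    have nS: "n = Suc (n - 1)" using n1 by simp
    define I where "I = (\<lambda>c. SOME i. i \<le> n \<and> (\<forall>s\<in>c. i \<notin> s))"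
    have I: "I c \<le> n \<and> (\<forall>s\<in>c. I c \<notin> s)" if "c \<in> Bn n" for c
      unfolding I_def using someI_ex[OF Bn_miss[OF that]] .
    define zz where "zz = (\<lambda>c. if c \<in> Bn n then xs (I c) (pre (I c) c) else undefined)"
    have wd2: "xs i (pre i c) = xs j (pre j c)" if "c \<in> Bn n" "i \<le> n" "j \<le> n" "\<forall>s\<in>c. i \<notin> s" "\<forall>s\<in>c. j \<notin> s" for c i j
    proof -
      consider "i < j" | "i = j" | "j < i" by arith
      then show ?thesis
        using wd[OF n1 compat that(1)] that by metis
    qed
    have zz_eq: "zz c = xs i (pre i c)" if "c \<in> Bn n" "i \<le> n" "\<forall>s\<in>c. i \<notin> s" for c i
      using wd2[OF that(1) _ that(2) _ that(3)] I[OF that(1)] that(1) unfolding zz_def by auto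
    have pre_in: "pre i c \<in> sd2 (n - 1)" if "c \<in> Bn n" "i \<le> n" "\<forall>s\<in>c. i \<notin> s" for c i
      using pre_sd2[of c "n - 1" i] that nS unfolding Bn_def by auto
    have xsi: "\<forall>c\<in>sd2 (n-1). xs i c \<in> VV Y S" "\<forall>c\<in>sd2 (n-1). \<forall>d\<in>sd2 (n-1). c \<subseteq> d \<longrightarrow> (xs i c, xs i d) \<in> RE Y S"
      "\<forall>c. c \<notin> sd2 (n-1) \<longrightarrow> xs i c = undefined" if "i \<le> n" for i
      using xs that unfolding ex2_iff by auto
    have zV: "zz \<in> Bn n \<rightarrow>\<^sub>E VV Y S"
    proof -
      have "zz c \<in> VV Y S" if "c \<in> Bn n" for c
        using zz_eq[OF that] I[OF that] pre_in[OF that] xsi(1) by metis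
      then show ?thesis unfolding zz_def by (auto simp: PiE_iff extensional_def)
    qed
    have zm: "\<forall>q1\<in>Bn n. \<forall>q2\<in>Bn n. q1 \<subseteq> q2 \<longrightarrow> zz q1 \<in> below (zz q2)"
    proof (intro ballI impI)
      fix q1 q2 assume q: "q1 \<in> Bn n" "q2 \<in> Bn n" "q1 \<subseteq> q2"
      obtain i where i: "i \<le> n" "\<forall>s\<in>q2. i \<notin> s" using Bn_miss[OF q(2)] by blast
      have i1: "\<forall>s\<in>q1. i \<notin> s" using i q(3) by blast
      have "pre i q1 \<subseteq> pre i q2" unfolding pre_def using q(3) by blast
      then have "(xs i (pre i q1), xs i (pre i q2)) \<in> RE Y S"
        using xsi(2)[OF i(1)] pre_in[OF q(1) i(1) i1] pre_in[OF q(2) i] by blast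
      then show "zz q1 \<in> below (zz q2)"
        using zz_eq[OF q(1) i(1) i1] zz_eq[OF q(2) i] unfolding RE_def by simp
    qed
    have zp: "\<forall>q\<in>Bn n. pE (zz q) = y q"
    proof
      fix q assume q: "q \<in> Bn n"
      obtain i where i: "i \<le> n" "\<forall>s\<in>q. i \<notin> s" using Bn_miss[OF q] by blast
      have pq: "pre i q \<in> sd2 (n - 1)" using pre_in[OF q i] .
      have "y (img i (pre i q)) = ex2_face n i y (pre i q)" using face_eval[OF pq] by metis
      also have "\<dots> = ex2_map (n - 1) pE (xs i) (pre i q)" using fy i by simp
      also have "\<dots> = pE (xs i (pre i q))" using map_eval[OF pq] by metis
      finally have "y (img i (pre i q)) = pE (xs i (pre i q))" .
      then show "pE (zz q) = y q" using img_pre[OF i(2)] zz_eq[OF q i] by simp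
    qed
    define w where "w \<equiv> \<lambda>d. if d \<in> sd2 n then (if {0..n} \<in> d then Cell n zz y (d - {{0..n}}) else zz d) else undefined"
    have w: "w \<in> ex2 (VV Y S) (RE Y S) n" "\<forall>d\<in>Bn n. w d = zz d" "ex2_map n pE w = y"
      using fill[OF po zV zm zp y] unfolding w_def by blast+
    have "ex2_face n i w = xs i" if i: "i \<le> n" for i
    proof
      fix c
      show "ex2_face n i w c = xs i c"
      proof (cases "c \<in> sd2 (n - 1)")
        case True
        have cB: "img i c \<in> Bn n" using img_Bn[OF True, of i] i nS by simp
        have "w (img i c) = xs i (pre i (img i c))"
          using w(2) cB zz_eq[OF cB i] img_miss[of _ i c] by metis
        then show ?thesis using face_eval[OF True] pre_img by metis
      next
        case False
        then show ?thesis using xsi(3)[OF i] unfolding ex2_face_def by simp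
      qed
    qed
    then show "\<exists>z\<in>ex2 (VV Y S) (RE Y S) n. (\<forall>i\<le>n. ex2_face n i z = xs i) \<and> ex2_map n pE z = y"
      using w by blast
  qed
qed


lemma countable_PiE':
  "finite I \<Longrightarrow> (\<And>i. i \<in> I \<Longrightarrow> countable (F i)) \<Longrightarrow> countable (Pi\<^sub>E I F)"
  by (induct I arbitrary: F rule: finite_induct) (auto simp: PiE_insert_eq)

lemma finite_cone: "finite (cone n)"
  unfolding cone_def using finite_Bn by simp

lemma countable_L: "countable (L Y S k)"
proof (induction k)
  case 0 then show ?case by simp
next
  case (Suc k)
  have cY: "countable Y" by (rule countable_subset[OF subset_UNIV countableI_type])
  let ?T = "SIGMA n:UNIV. (Bn n \<rightarrow>\<^sub>E L Y S k) \<times> (sd2 n \<rightarrow>\<^sub>E Y) \<times> cone n"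
  have "countable ((Bn n \<rightarrow>\<^sub>E L Y S k) \<times> (sd2 n \<rightarrow>\<^sub>E Y) \<times> cone n)" for n
  proof -
    have c1: "countable (Bn n \<rightarrow>\<^sub>E L Y S k)" by (rule countable_PiE'[OF finite_Bn Suc.IH])
    have c2: "countable (sd2 n \<rightarrow>\<^sub>E Y)" by (rule countable_PiE'[OF finite_sd2 cY])
    have c3: "countable (cone n)" using countable_finite[OF finite_cone] .
    show ?thesis using countable_SIGMA[OF c1 countable_SIGMA[OF c2 c3]] .
  qed
  then have "countable ?T" by (rule countable_SIGMA[OF countableI_type])
  moreover have "L Y S (Suc k) \<subseteq> (\<lambda>(n, z, y, c). Cell n z y c) ` ?T"
  proof
    fix e assume "e \<in> L Y S (Suc k)"
    then obtain n z y c where e: "e = Cell n z y c" and ok: "cellok Y S (L Y S k) n z y c" by auto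
    have "z \<in> Bn n \<rightarrow>\<^sub>E L Y S k" using ok unfolding cellok_def by (elim conjE)
    moreover have "y \<in> sd2 n \<rightarrow>\<^sub>E Y" using ok unfolding cellok_def by (elim conjE)
    moreover have "c \<in> cone n" using ok unfolding cellok_def by (elim conjE)
    ultimately have "(n, z, y, c) \<in> ?T" by (intro SigmaI UNIV_I)
    then show "e \<in> (\<lambda>(n, z, y, c). Cell n z y c) ` ?T" unfolding e by (rule rev_image_eqI) simp
  qed
  ultimately show ?case by (meson countable_image countable_subset)
qed

lemma countable_VV: "countable (VV Y S)"
  unfolding VV_def using countable_L by blast

definition cv :: "nat \<Rightarrow> ('a \<Rightarrow> 'b) \<Rightarrow> (nat set set \<Rightarrow> 'a) \<Rightarrow> (nat set set \<Rightarrow> 'b)" where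
  "cv m F h = (\<lambda>c. if c \<in> sd2 m then F (h c) else undefined)"

lemma mp_imageE:
  assumes "(x, y) \<in> map_prod f f ` R"
  obtains a b where "(a, b) \<in> R" "x = f a" "y = f b"
proof -
  obtain q where q: "(x, y) = map_prod f f q" "q \<in> R" using assms by (rule imageE)
  obtain a b where "q = (a, b)" by (cases q)
  then show ?thesis using q that by simp
qed

lemma po_transport:
  assumes inj: "inj_on f V" and po: "partial_order_on V R"
  shows "partial_order_on (f ` V) (map_prod f f ` R)"
proof -
  have sub: "R \<subseteq> V \<times> V" "refl_on V R" "trans R" "antisym R" using po partial_order_onD by blast+
  have 1: "map_prod f f ` R \<subseteq> f ` V \<times> f ` V" using sub(1) by auto
  have 2: "refl_on (f ` V) (map_prod f f ` R)" using sub(2) unfolding refl_on_def by force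
  have key: "(a, b) \<in> R" if H: "(f a, f b) \<in> map_prod f f ` R" "a \<in> V" "b \<in> V" for a b
  proof -
    obtain a' b' where "(a', b') \<in> R" "f a' = f a" "f b' = f b" using mp_imageE[OF H(1)] by metis
    moreover then have "a' \<in> V" "b' \<in> V" using sub(1) by auto
    ultimately show ?thesis using inj H(2,3) unfolding inj_on_def by metis
  qed
  have 3: "trans (map_prod f f ` R)"
  proof (rule transI)
    fix x y z assume xy: "(x, y) \<in> map_prod f f ` R" and yz: "(y, z) \<in> map_prod f f ` R"
    then obtain a b where ab: "(a, b) \<in> R" "x = f a" "y = f b" using mp_imageE by metis
    obtain b' c where bc: "(b', c) \<in> R" "y = f b'" "z = f c" using yz mp_imageE by metis
    have "b \<in> V" "b' \<in> V" using ab bc sub(1) by auto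
    then have "b = b'" using ab bc inj unfolding inj_on_def by metis
    then show "(x, z) \<in> map_prod f f ` R" using ab bc sub(3) unfolding trans_def by force
  qed
  have 4: "antisym (map_prod f f ` R)"
  proof (rule antisymI)
    fix x y assume xy: "(x, y) \<in> map_prod f f ` R" and yx: "(y, x) \<in> map_prod f f ` R"
    then obtain a b where ab: "(a, b) \<in> R" "x = f a" "y = f b" using mp_imageE by metis
    have "a \<in> V" "b \<in> V" using ab sub(1) by auto
    then have "(b, a) \<in> R" using key yx ab by simp
    then show "x = y" using ab sub(4) unfolding antisym_def by auto
  qed
  show ?thesis unfolding partial_order_on_def preorder_on_def using 1 2 3 4 by blast
qed

lemma transport_fib:
  assumes inj: "inj_on f V" and RV: "R \<subseteq> V \<times> V"
    and fib: "pos_acyclic_fibration V R Y S p"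
  shows "pos_acyclic_fibration (f ` V) (map_prod f f ` R) Y S (p \<circ> inv_into V f)"
proof -
  let ?g = "inv_into V f" and ?R' = "map_prod f f ` R"
  have gf: "?g (f a) = a" if "a \<in> V" for a using inv_into_f_f[OF inj that] .
  have fg: "f (?g x) = x" if "x \<in> f ` V" for x using f_inv_into_f[OF that] .
  have gV: "?g x \<in> V" if "x \<in> f ` V" for x using inv_into_into[OF that] .
  have keyR: "(?g x, ?g y) \<in> R" if H: "(x, y) \<in> ?R'" for x y
  proof -
    obtain a b where "(a, b) \<in> R" "x = f a" "y = f b" using mp_imageE[OF H] by metis
    moreover then have "a \<in> V" "b \<in> V" using RV by auto
    ultimately show ?thesis using gf by simp
  qed
  have back_in: "cv m ?g h \<in> ex2 V R m" if "h \<in> ex2 (f ` V) ?R' m" for h m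
    using that gV keyR unfolding ex2_iff cv_def by auto
  have fwd_in: "cv m f z \<in> ex2 (f ` V) ?R' m" if "z \<in> ex2 V R m" for z m
    using that unfolding ex2_iff cv_def by auto
  have fwd_back: "cv m f (cv m ?g h) = h" if "h \<in> ex2 (f ` V) ?R' m" for h m
    using that fg unfolding ex2_iff cv_def by auto
  have face_cv: "ex2_face m i (cv m F h) = cv (m - 1) F (ex2_face m i h)" if "m \<ge> 1" for m i F and h :: "nat set set \<Rightarrow> 'z"
  proof
    fix c
    show "ex2_face m i (cv m F h) c = cv (m - 1) F (ex2_face m i h) c"
    proof (cases "c \<in> sd2 (m - 1)")
      case True
      have "img i c \<in> sd2 m" using img_sd2[OF True, of i] that by simp
      then show ?thesis using True unfolding ex2_face_def cv_def img_def by simp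
    qed (simp add: ex2_face_def cv_def)
  qed
  have map_back: "ex2_map m (p \<circ> ?g) h = ex2_map m p (cv m ?g h)" for m h
    unfolding ex2_map_def cv_def by auto
  have map_fwd: "ex2_map m (p \<circ> ?g) (cv m f z) = ex2_map m p z" if "z \<in> ex2 V R m" for m z
    using that gf unfolding ex2_map_def cv_def ex2_iff by auto
  have mono: "mono_map V R Y S p" and surj0: "\<forall>y\<in>ex2 Y S 0. \<exists>z\<in>ex2 V R 0. ex2_map 0 p z = y"
    and lift: "\<forall>n\<ge>1. \<forall>xs :: nat \<Rightarrow> (nat set set \<Rightarrow> 'a). \<forall>y.
        (\<forall>i\<le>n. xs i \<in> ex2 V R (n - 1)) \<and>
        (n \<ge> 2 \<longrightarrow> (\<forall>i j. i < j \<and> j \<le> n \<longrightarrow>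
             ex2_face (n - 1) i (xs j) = ex2_face (n - 1) (j - 1) (xs i))) \<and>
        y \<in> ex2 Y S n \<and>
        (\<forall>i\<le>n. ex2_face n i y = ex2_map (n - 1) p (xs i))
        \<longrightarrow> (\<exists>z\<in>ex2 V R n. (\<forall>i\<le>n. ex2_face n i z = xs i) \<and> ex2_map n p z = y)"
    using fib unfolding pos_acyclic_fibration_def by blast+
  show ?thesis
    unfolding pos_acyclic_fibration_def
  proof (intro conjI)
    show "mono_map (f ` V) ?R' Y S (p \<circ> ?g)"
      using mono gV keyR unfolding mono_map_def by auto
    show "\<forall>y\<in>ex2 Y S 0. \<exists>z\<in>ex2 (f ` V) ?R' 0. ex2_map 0 (p \<circ> ?g) z = y"
    proof
      fix y assume "y \<in> ex2 Y S 0"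
      then obtain z where "z \<in> ex2 V R 0" "ex2_map 0 p z = y" using surj0 by blast
      then show "\<exists>z\<in>ex2 (f ` V) ?R' 0. ex2_map 0 (p \<circ> ?g) z = y"
        using fwd_in map_fwd by blast
    qed
    show "\<forall>n\<ge>1. \<forall>xs y. (\<forall>i\<le>n. xs i \<in> ex2 (f ` V) ?R' (n - 1)) \<and>
        (2 \<le> n \<longrightarrow> (\<forall>i j. i < j \<and> j \<le> n \<longrightarrow> ex2_face (n - 1) i (xs j) = ex2_face (n - 1) (j - 1) (xs i))) \<and>
        y \<in> ex2 Y S n \<and> (\<forall>i\<le>n. ex2_face n i y = ex2_map (n - 1) (p \<circ> ?g) (xs i)) \<longrightarrow>
        (\<exists>z\<in>ex2 (f ` V) ?R' n. (\<forall>i\<le>n. ex2_face n i z = xs i) \<and> ex2_map n (p \<circ> ?g) z = y)"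
    proof (intro allI impI, elim conjE)
      fix n :: nat and xs' :: "nat \<Rightarrow> nat set set \<Rightarrow> 'b" and y
      assume n1: "1 \<le> n" and xs': "\<forall>i\<le>n. xs' i \<in> ex2 (f ` V) ?R' (n - 1)"
        and compat: "2 \<le> n \<longrightarrow> (\<forall>i j. i < j \<and> j \<le> n \<longrightarrow> ex2_face (n - 1) i (xs' j) = ex2_face (n - 1) (j - 1) (xs' i))"
        and y: "y \<in> ex2 Y S n" and fy: "\<forall>i\<le>n. ex2_face n i y = ex2_map (n - 1) (p \<circ> ?g) (xs' i)"
      define xs where "xs = (\<lambda>i. cv (n - 1) ?g (xs' i))"
      have 1: "\<forall>i\<le>n. xs i \<in> ex2 V R (n - 1)" unfolding xs_def using xs' back_in by blast
      have 2: "2 \<le> n \<longrightarrow> (\<forall>i j. i < j \<and> j \<le> n \<longrightarrow> ex2_face (n - 1) i (xs j) = ex2_face (n - 1) (j - 1) (xs i))"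
      proof (intro impI allI, elim conjE)
        fix i j assume "2 \<le> n" "i < j" "j \<le> n"
        moreover have "n - 1 \<ge> 1" using \<open>2 \<le> n\<close> by simp
        ultimately show "ex2_face (n - 1) i (xs j) = ex2_face (n - 1) (j - 1) (xs i)"
          unfolding xs_def using face_cv compat by metis
      qed
      have 3: "\<forall>i\<le>n. ex2_face n i y = ex2_map (n - 1) p (xs i)"
        unfolding xs_def using fy map_back by metis
      obtain z where z: "z \<in> ex2 V R n" "\<forall>i\<le>n. ex2_face n i z = xs i" "ex2_map n p z = y"
        using lift n1 1 2 y 3 by blast
      have "\<forall>i\<le>n. ex2_face n i (cv n f z) = xs' i"
      proof (intro allI impI)
        fix i assume "i \<le> n"
        have "ex2_face n i (cv n f z) = cv (n - 1) f (ex2_face n i z)" using face_cv n1 by blast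
        also have "\<dots> = cv (n - 1) f (xs i)" using z(2) \<open>i \<le> n\<close> by simp
        also have "\<dots> = xs' i" unfolding xs_def using fwd_back xs' \<open>i \<le> n\<close> by blast
        finally show "ex2_face n i (cv n f z) = xs' i" .
      qed
      moreover have "ex2_map n (p \<circ> ?g) (cv n f z) = y" using map_fwd z by simp
      ultimately show "\<exists>z\<in>ex2 (f ` V) ?R' n. (\<forall>i\<le>n. ex2_face n i z = xs' i) \<and> ex2_map n (p \<circ> ?g) z = y"
        using fwd_in z(1) by blast
    qed
  qed
qed


fun code :: "A_elt \<Rightarrow> nat" where
  "code a1 = 0" | "code a2 = 1" | "code b1 = 2" | "code b2 = 3" | "code c1 = 4" | "code c2 = 5"

definition Yc :: "nat set" where "Yc = range code"
definition Sc :: "(nat \<times> nat) set" where "Sc = map_prod code code ` A_rel"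
definition dec :: "nat \<Rightarrow> A_elt" where "dec = inv code"

lemma inj_code: "inj code"
proof (rule injI)
  fix x y assume "code x = code y" then show "x = y" by (cases x; cases y) auto
qed

lemma dec_code[simp]: "dec (code x) = x"
  unfolding dec_def using inj_code by simp

lemma po_A: "partial_order_on UNIV A_rel"
proof -
  have "refl_on UNIV A_rel" unfolding refl_on_def A_rel_def by auto
  moreover have "trans A_rel" unfolding trans_def A_rel_def by auto
  moreover have "antisym A_rel" unfolding antisym_def A_rel_def by auto
  ultimately show ?thesis unfolding partial_order_on_def preorder_on_def by auto
qed

lemma po_Y: "partial_order_on Yc Sc"
  unfolding Yc_def Sc_def using po_transport[OF _ po_A, of code] inj_code by simp

lemma relA:
  assumes e: "e \<in> L Yc Sc k" and x: "x \<in> below e"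
  shows "(dec (pE x), dec (pE e)) \<in> A_rel"
proof -
  have "(pE x, pE e) \<in> Sc" using pE_props[OF po_Y e] x by blast
  then obtain a b where "(a, b) \<in> A_rel" "pE x = code a" "pE e = code b"
    unfolding Sc_def using mp_imageE by metis
  then show ?thesis by simp
qed

lemma same_cell: "Cell n z y c' \<in> L Y S k \<Longrightarrow> c \<in> cone n \<Longrightarrow> Cell n z y c \<in> L Y S k"
  by (cases k) (auto intro: cellok_cone)

lemma A1: "(b1, v) \<in> A_rel \<Longrightarrow> (b2, v) \<in> A_rel \<Longrightarrow> (v, c1) \<in> A_rel \<Longrightarrow> (v, c2) \<in> A_rel \<Longrightarrow> False"
  by (cases v) (simp_all add: A_rel_def)

lemma A2: "(a1, v) \<in> A_rel \<Longrightarrow> (a2, v) \<in> A_rel \<Longrightarrow> (v, b) \<in> A_rel \<Longrightarrow> A_level b = 1 \<Longrightarrow> v = b"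
  by (cases v; cases b) (simp_all add: A_rel_def)

lemma A3: "(b1, v) \<in> A_rel \<Longrightarrow> (b2, v) \<in> A_rel \<Longrightarrow> (v, c) \<in> A_rel \<Longrightarrow> A_level c = 2 \<Longrightarrow> v = c"
  by (cases v; cases c) (simp_all add: A_rel_def)

lemma A_a: "x \<noteq> a1 \<Longrightarrow> x \<noteq> a2 \<Longrightarrow> (a1, x) \<in> A_rel \<and> (a2, x) \<in> A_rel"
  by (cases x) (simp_all add: A_rel_def)

primrec ret :: "E \<Rightarrow> E" where
  "ret Base = Base" | "ret (Cell n z y c) = z c"

lemma nosec_L:
  "\<forall>s. (\<forall>x. s x \<in> L Yc Sc k) \<and> (\<forall>x y. (x, y) \<in> A_rel \<longrightarrow> s x \<in> below (s y)) \<and> (\<forall>x. dec (pE (s x)) = x) \<longrightarrow> False"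
proof (induction k)
  case 0 then show ?case by simp
next
  case (Suc k)
  show ?case
  proof (intro allI impI, elim conjE)
    fix s assume sL: "\<forall>x. s x \<in> L Yc Sc (Suc k)" and sm: "\<forall>x y. (x, y) \<in> A_rel \<longrightarrow> s x \<in> below (s y)"
      and sp: "\<forall>x. dec (pE (s x)) = x"
    have rb: "(x, y) \<in> A_rel" if "A_level x < A_level y" for x y using that unfolding A_rel_def by simp
    show False
    proof (cases "s b1 \<notin> L Yc Sc k \<and> s b2 \<notin> L Yc Sc k")
      case True
      have samec: "\<exists>N Z Yf g. s c = Cell N Z Yf g \<and> cellok Yc Sc (L Yc Sc k) N Z Yf g \<and>
         (\<exists>\<beta>1 \<beta>2. \<beta>1 \<subseteq> g \<and> \<beta>2 \<subseteq> g \<and> s b1 = Cell N Z Yf \<beta>1 \<and> s b2 = Cell N Z Yf \<beta>2)"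
        if "c = c1 \<or> c = c2" for c
      proof -
        obtain N Z Yf g where sc: "s c = Cell N Z Yf g" and ok: "cellok Yc Sc (L Yc Sc k) N Z Yf g"
          using L_Suc_E sL by blast
        have h: "\<exists>\<beta>. \<beta> \<subseteq> g \<and> s b = Cell N Z Yf \<beta>" if "b = b1 \<or> b = b2" for b
        proof -
          have nb: "s b \<notin> L Yc Sc k" using True that by auto
          have "(b, c) \<in> A_rel" using rb[of b c] \<open>c = c1 \<or> c = c2\<close> that by auto
          then have "s b \<in> below (s c)" using sm by blast
          from this[unfolded sc] show ?thesis
          proof (cases rule: below_cases)
            case (1 c') then show ?thesis by blast
          next
            case 2
            have "Z g \<in> L Yc Sc k" using cellok_z[OF ok cellok_Bn[OF ok 2(1)]] .
            then show ?thesis using below_L 2(2) nb by blast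
          qed
        qed
        show ?thesis using h[of b1] h[of b2] sc ok by blast
      qed
      obtain N Z Yf g1 \<beta>1 \<beta>2 where s1: "s c1 = Cell N Z Yf g1" "cellok Yc Sc (L Yc Sc k) N Z Yf g1"
        "\<beta>1 \<subseteq> g1" "\<beta>2 \<subseteq> g1" "s b1 = Cell N Z Yf \<beta>1" "s b2 = Cell N Z Yf \<beta>2"
        using samec[of c1] by blast
      obtain N' Z' Yf' g2 \<beta>1' \<beta>2' where s2: "s c2 = Cell N' Z' Yf' g2" "cellok Yc Sc (L Yc Sc k) N' Z' Yf' g2"
        "\<beta>1' \<subseteq> g2" "\<beta>2' \<subseteq> g2" "s b1 = Cell N' Z' Yf' \<beta>1'" "s b2 = Cell N' Z' Yf' \<beta>2'"
        using samec[of c2] by blast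
      have eqs: "N' = N" "Z' = Z" "Yf' = Yf" "\<beta>1' = \<beta>1" "\<beta>2' = \<beta>2" using s1(5,6) s2(5,6) by auto
      define m where "m = Cell N Z Yf (\<beta>1 \<union> \<beta>2)"
      have "\<beta>1 \<union> \<beta>2 \<in> cone N" using cone_sub[OF cellok_coneD[OF s1(2)]] s1(3,4) by blast
      then have mL: "m \<in> L Yc Sc (Suc k)" unfolding m_def using cellok_cone[OF s1(2)] by simp
      have m1: "s b1 \<in> below m" "s b2 \<in> below m" unfolding m_def s1(5,6) by auto
      have m2: "m \<in> below (s c1)" "m \<in> below (s c2)" unfolding m_def s1(1) s2(1) eqs using s1(3,4) s2(3,4) eqs by auto
      have "(b1, dec (pE m)) \<in> A_rel" using relA[OF mL m1(1)] sp by metis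
      moreover have "(b2, dec (pE m)) \<in> A_rel" using relA[OF mL m1(2)] sp by metis
      moreover have "(dec (pE m), c1) \<in> A_rel" using relA[OF sL[rule_format] m2(1)] sp by metis
      moreover have "(dec (pE m), c2) \<in> A_rel" using relA[OF sL[rule_format] m2(2)] sp by metis
      ultimately show False using A1 by blast
    next
      case False
      then obtain b where b: "b = b1 \<or> b = b2" "s b \<in> L Yc Sc k" by blast
      have aL: "s a \<in> L Yc Sc k" if "a = a1 \<or> a = a2" for a
        using below_L[OF b(2)] sm rb[of a b] that b(1) by auto
      define s' where "s' = (\<lambda>x. if s x \<in> L Yc Sc k then s x else ret (s x))"
      have newx: "\<exists>n z y c. s x = Cell n z y c \<and> cellok Yc Sc (L Yc Sc k) n z y c \<and> c \<noteq> {} \<and> s' x = z c"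
        if nx: "s x \<notin> L Yc Sc k" for x
      proof -
        obtain n z y c where sx: "s x = Cell n z y c" and ok: "cellok Yc Sc (L Yc Sc k) n z y c"
          using L_Suc_E sL by blast
        have "x \<noteq> a1" "x \<noteq> a2" using aL nx by auto
        then have "s a1 \<in> below (Cell n z y c)" using A_a sm sx by metis
        then have "c \<noteq> {}"
        proof (cases rule: below_cases)
          case (1 c')
          then have "Cell n z y c \<in> L Yc Sc k" using same_cell aL[of a1] cellok_coneD[OF ok] by metis
          then show ?thesis using nx sx by simp
        qed
        then show ?thesis using sx ok nx unfolding s'_def by simp
      qed
      have s'L: "s' x \<in> L Yc Sc k" for x
      proof (cases "s x \<in> L Yc Sc k")
        case True then show ?thesis unfolding s'_def by simp
      next
        case False
        then obtain n z y c where "s x = Cell n z y c" "cellok Yc Sc (L Yc Sc k) n z y c" "c \<noteq> {}" "s' x = z c"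
          using newx by blast
        then show ?thesis using cellok_z cellok_Bn by metis
      qed
      have s'le: "s' x \<in> below (s x)" for x
      proof (cases "s x \<in> L Yc Sc k")
        case True then show ?thesis unfolding s'_def using below_refl by simp
      next
        case False
        then obtain n z y c where "s x = Cell n z y c" "c \<noteq> {}" "s' x = z c"
          using newx by blast
        then show ?thesis using below_refl[of "z c"] by simp
      qed
      have s'm: "s' x \<in> below (s' y)" if xy: "(x, y) \<in> A_rel" for x y
      proof (cases "s y \<in> L Yc Sc k")
        case True
        then have "s x \<in> L Yc Sc k" using below_L sm xy by blast
        then show ?thesis using True sm xy unfolding s'_def by simp
      next
        case False
        then obtain n z yy c where sy: "s y = Cell n z yy c" "cellok Yc Sc (L Yc Sc k) n z yy c" "c \<noteq> {}" "s' y = z c"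
          using newx by blast
        have "s x \<in> below (Cell n z yy c)" using sm xy sy(1) by metis
        then show ?thesis
        proof (cases rule: below_cases)
          case (1 c')
          have nx: "s x \<notin> L Yc Sc k" using same_cell 1(2) cellok_coneD[OF sy(2)] False sy(1) by metis
          then obtain n2 z2 y2 c2' where sx: "s x = Cell n2 z2 y2 c2'" "c2' \<noteq> {}" "s' x = z2 c2'"
            using newx by blast
          have eq: "n2 = n" "z2 = z" "c2' = c'" using sx(1) 1(2) by auto
          have "c' \<in> Bn n" using sx(2) eq cellok_Bn[OF sy(2)] 1(1) Bn_sub by (metis sy(3))
          moreover have "c \<in> Bn n" using cellok_Bn[OF sy(2) sy(3)] .
          ultimately have "z c' \<in> below (z c)" using cellok_zmono[OF sy(2)] 1(1) by blast
          then show ?thesis using sx(3) sy(4) eq by simp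
        next
          case 2
          have "Z \<in> L Yc Sc k" if "Z = z c" for Z using cellok_z[OF sy(2) cellok_Bn[OF sy(2) sy(3)]] that by simp
          then have "s x \<in> L Yc Sc k" using below_L 2(2) by blast
          then show ?thesis using 2(2) sy(4) unfolding s'_def by simp
        qed
      qed
      have i: "(dec (pE (s' x)), x) \<in> A_rel" for x
        using relA[OF sL[rule_format] s'le[of x]] sp by metis
      have ii: "(dec (pE (s' x)), dec (pE (s' y))) \<in> A_rel" if "(x, y) \<in> A_rel" for x y
        using relA[OF s'L s'm[OF that]] .
      have iii: "dec (pE (s' a)) = a" if "a = a1 \<or> a = a2" for a
        using aL[OF that] sp unfolding s'_def by simp
      have ivb: "dec (pE (s' b)) = b" if "b = b1 \<or> b = b2" for b
      proof -
        have "(a1, dec (pE (s' b))) \<in> A_rel" using ii[of a1 b] iii[of a1] rb[of a1 b] that by auto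
        moreover have "(a2, dec (pE (s' b))) \<in> A_rel" using ii[of a2 b] iii[of a2] rb[of a2 b] that by auto
        ultimately show ?thesis using A2 i[of b] that by auto
      qed
      have ivc: "dec (pE (s' c)) = c" if "c = c1 \<or> c = c2" for c
      proof -
        have "(b1, dec (pE (s' c))) \<in> A_rel" using ii[of b1 c] ivb[of b1] rb[of b1 c] that by auto
        moreover have "(b2, dec (pE (s' c))) \<in> A_rel" using ii[of b2 c] ivb[of b2] rb[of b2 c] that by auto
        ultimately show ?thesis using A3 i[of c] that by auto
      qed
      have "dec (pE (s' x)) = x" for x
        using iii ivb ivc by (cases x) auto
      then show False using Suc.IH s'L s'm by blast
    qed
  qed
qed


lemma nosec:
  assumes sV: "\<forall>x. s x \<in> VV Yc Sc" and sm: "\<forall>x y. (x, y) \<in> A_rel \<longrightarrow> s x \<in> below (s y)"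
    and sp: "\<forall>x. dec (pE (s x)) = x"
  shows False
proof -
  have "\<forall>x. \<exists>k. s x \<in> L Yc Sc k" using sV VV_L by blast
  then obtain lv where lv: "\<forall>x. s x \<in> L Yc Sc (lv x)" by metis
  define k where "k = Max (range lv)"
  have "s x \<in> L Yc Sc k" for x
  proof -
    have "x \<in> {a1, a2, b1, b2, c1, c2}" for x by (cases x) auto
    then have "(UNIV :: A_elt set) = {a1, a2, b1, b2, c1, c2}" by blast
    then have "finite (range lv)" by (metis finite.emptyI finite.insertI finite_imageI)
    then have "lv x \<le> k" unfolding k_def by simp
    then show ?thesis using L_mono lv by blast
  qed
  then show False using nosec_L[of k] sm sp by blast
qed

theorem proposition6p2:
  shows "\<not> pos_cofibrant_wrt TYPE(nat) (UNIV :: A_elt set) A_rel"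
proof
  assume H: "pos_cofibrant_wrt TYPE(nat) (UNIV :: A_elt set) A_rel"
  define V where "V = VV Yc Sc"
  define f where "f = to_nat_on V"
  have inj: "inj_on f V" unfolding f_def V_def using countable_VV by blast
  have RV: "RE Yc Sc \<subseteq> V \<times> V" unfolding RE_def V_def by auto
  let ?X = "f ` V" and ?RX = "map_prod f f ` RE Yc Sc" and ?p = "pE \<circ> inv_into V f"
  have poX: "partial_order_on ?X ?RX" using po_transport[OF inj] partial_order_VV unfolding V_def by blast
  have fib: "pos_acyclic_fibration ?X ?RX Yc Sc ?p"
    using transport_fib[OF inj RV] acyclic_VV[OF po_Y] unfolding V_def by blast
  have mc: "mono_map UNIV A_rel Yc Sc code" unfolding mono_map_def Yc_def Sc_def by auto
  have "\<forall>g. mono_map UNIV A_rel Yc Sc g \<longrightarrow> (\<exists>h. mono_map UNIV A_rel ?X ?RX h \<and> (\<forall>a\<in>UNIV. ?p (h a) = g a))"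
    using H poX po_Y fib unfolding pos_cofibrant_wrt_def by blast
  then obtain h where h: "mono_map UNIV A_rel ?X ?RX h" "\<forall>a. ?p (h a) = code a"
    using mc by blast
  define s where "s = (\<lambda>x. inv_into V f (h x))"
  have hX: "h x \<in> ?X" for x using h(1) unfolding mono_map_def by blast
  have sV: "\<forall>x. s x \<in> VV Yc Sc" unfolding s_def using hX inv_into_into V_def by metis
  have sm: "\<forall>x y. (x, y) \<in> A_rel \<longrightarrow> s x \<in> below (s y)"
  proof (intro allI impI)
    fix x y assume "(x, y) \<in> A_rel"
    then have "(h x, h y) \<in> ?RX" using h(1) unfolding mono_map_def by blast
    then obtain a b where ab: "(a, b) \<in> RE Yc Sc" "h x = f a" "h y = f b" using mp_imageE by metis
    then have "a \<in> V" "b \<in> V" using RV by auto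
    then have "s x = a" "s y = b" unfolding s_def using ab inv_into_f_f[OF inj] by auto
    then show "s x \<in> below (s y)" using ab(1) unfolding RE_def by simp
  qed
  have sp: "\<forall>x. dec (pE (s x)) = x" using h(2) unfolding s_def by simp
  show False using nosec[OF sV sm sp] .
qed

end
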